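(* Let $\alpha\in\mathbb R\setminus\{0\}$, $k\ge3$ an integer and $\mathbf L=\mathbf a^k-\alpha^k\mathbf 1$ on $\mathcal H_a$. Define $\mathcal E^a_{\mathbf L}=\mathrm{Span}\{(\mathbf L^\dagger)^j|v\rangle\mid j\in\mathbb N,\ |v\rangle\in\ker\mathbf L\}$ and $\mathcal E^\sharp_{\mathbf L}=\mathrm{Span}\{(\mathbf L^\dagger)^j[\mathbf L,\mathbf L^\dagger]^{(s)}|v\rangle\mid j\in\mathbb N,\ 1\le s\le k-1,\ |v\rangle\in\ker\mathbf L\}$. Then $\mathcal E^a_{\mathbf L}+\mathcal E^\sharp_{\mathbf L}$ is dense in $\mathcal H_a$.
   Context: $\mathcal H_a=L^2(\mathbb R,\mathbb C)$ with Fock basis $(|n\rangle)$, $\mathbf a$ the annihilation operator, $\mathbf a^\dagger$ the creation operator. $[A,B]^{(s)}$ denotes the $s$-th iterated right commutator: $[A,B]^{(1)}=[A,B]=AB-BA$, $[A,B]^{(s+1)}=[[A,B]^{(s)},B]$. $\ker\mathbf L=\mathrm{Span}\{|\alpha\omega^r\rangle\mid0\le r\le k-1\}$ with $\omega=e^{2i\pi/k}$ and coherent states $|z\rangle=e^{-|z|^2/2}\sum_n\frac{z^n}{\sqrt{n!}}|n\rangle$; these vectors lie in the domain of every polynomial in $\mathbf a,\mathbf a^\dagger$, so the expressions are well defined. *)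

theory Defs
  imports "HOL-Analysis.Analysis"
begin

text \<open>The harmonic-oscillator Hilbert space L^2(R) is represented in its Fock basis,
  i.e. as square-summable coefficient sequences nat => complex (the Hermite-function
  basis gives a unitary identification). Operators are polynomials in a, a-dagger,
  acting formally on coefficient sequences; on the vectors in question (polynomials
  in a, a-dagger applied to coherent states) this is the genuine action.\<close>

type_synonym fock = "nat \<Rightarrow> complex"

definition in_H :: "fock \<Rightarrow> bool" where
  "in_H f \<longleftrightarrow> summable (\<lambda>n. (cmod (f n))\<^sup>2)"

definition ann :: "fock \<Rightarrow> fock" where
  "ann f = (\<lambda>n. complex_of_real (sqrt (real (Suc n))) * f (Suc n))"

definition cre :: "fock \<Rightarrow> fock" where
  "cre f = (\<lambda>n. if n = 0 then 0 else complex_of_real (sqrt (real n)) * f (n - 1))"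

definition opL :: "real \<Rightarrow> nat \<Rightarrow> fock \<Rightarrow> fock" where
  "opL \<alpha> k f = (\<lambda>n. (ann ^^ k) f n - complex_of_real (\<alpha> ^ k) * f n)"

definition opLdag :: "real \<Rightarrow> nat \<Rightarrow> fock \<Rightarrow> fock" where
  "opLdag \<alpha> k f = (\<lambda>n. (cre ^^ k) f n - complex_of_real (\<alpha> ^ k) * f n)"

definition comm :: "(fock \<Rightarrow> fock) \<Rightarrow> (fock \<Rightarrow> fock) \<Rightarrow> fock \<Rightarrow> fock" where
  "comm A B = (\<lambda>f n. A (B f) n - B (A f) n)"

fun rcomm :: "(fock \<Rightarrow> fock) \<Rightarrow> (fock \<Rightarrow> fock) \<Rightarrow> nat \<Rightarrow> fock \<Rightarrow> fock" where
  "rcomm A B 0 = A"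
| "rcomm A B (Suc s) = comm (rcomm A B s) B"

definition coh :: "complex \<Rightarrow> fock" where
  "coh z = (\<lambda>n. complex_of_real (exp (- (cmod z)\<^sup>2 / 2)) * z ^ n
                 / complex_of_real (sqrt (fact n)))"

definition cspan :: "fock set \<Rightarrow> fock set" where
  "cspan S = {f. \<exists>F c. finite F \<and> F \<subseteq> S \<and> f = (\<lambda>n. \<Sum>v\<in>F. c v * v n)}"

definition kerL :: "real \<Rightarrow> nat \<Rightarrow> fock set" where
  "kerL \<alpha> k = cspan {coh (complex_of_real \<alpha> * cis (2 * pi / real k) ^ r) | r. r < k}"

definition Ea :: "real \<Rightarrow> nat \<Rightarrow> fock set" where
  "Ea \<alpha> k = cspan {(opLdag \<alpha> k ^^ j) v | j v. v \<in> kerL \<alpha> k}"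

definition Esharp :: "real \<Rightarrow> nat \<Rightarrow> fock set" where
  "Esharp \<alpha> k = cspan {(opLdag \<alpha> k ^^ j) (rcomm (opL \<alpha> k) (opLdag \<alpha> k) s v)
                        | j s v. 1 \<le> s \<and> s \<le> k - 1 \<and> v \<in> kerL \<alpha> k}"

definition dense_in_H :: "fock set \<Rightarrow> bool" where
  "dense_in_H E \<longleftrightarrow> (\<forall>\<psi>. in_H \<psi> \<longrightarrow> (\<forall>\<epsilon>>0. \<exists>\<phi>\<in>E. in_H \<phi> \<and>
      (\<Sum>n. (cmod (\<psi> n - \<phi> n))\<^sup>2) < \<epsilon>\<^sup>2))"

end

theory Submission
  imports Defs
begin

definition nrm :: "fock \<Rightarrow> real" where
  "nrm f = (\<Sum>n. (cmod (f n))\<^sup>2)"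

lemma sq_add_le: "(cmod (a + b))\<^sup>2 \<le> 2 * (cmod a)\<^sup>2 + 2 * (cmod b)\<^sup>2"
proof -
  have "cmod (a + b) \<le> cmod a + cmod b" by (rule norm_triangle_ineq)
  then have "(cmod (a + b))\<^sup>2 \<le> (cmod a + cmod b)\<^sup>2"
    by (simp add: power_mono)
  also have "\<dots> \<le> 2 * (cmod a)\<^sup>2 + 2 * (cmod b)\<^sup>2"
  proof -
    have "0 \<le> (cmod a - cmod b)\<^sup>2" by simp
    then show ?thesis by (simp add: power2_eq_square algebra_simps)
  qed
  finally show ?thesis .
qed

lemma inH_add:
  assumes "in_H f" "in_H g"
  shows "in_H (\<lambda>n. f n + g n)" "nrm (\<lambda>n. f n + g n) \<le> 2 * nrm f + 2 * nrm g"
proof -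
  have s: "summable (\<lambda>n. 2 * (cmod (f n))\<^sup>2 + 2 * (cmod (g n))\<^sup>2)"
    using assms unfolding in_H_def by (intro summable_add summable_mult) auto
  show "in_H (\<lambda>n. f n + g n)" unfolding in_H_def
    by (rule summable_comparison_test[OF _ s]) (auto intro: sq_add_le)
  then have "nrm (\<lambda>n. f n + g n) \<le> (\<Sum>n. 2 * (cmod (f n))\<^sup>2 + 2 * (cmod (g n))\<^sup>2)"
    unfolding nrm_def in_H_def by (intro suminf_le s) (auto intro: sq_add_le)
  also have "\<dots> = 2 * nrm f + 2 * nrm g"
    using assms unfolding nrm_def in_H_def by (simp add: suminf_add[symmetric] suminf_mult)
  finally show "nrm (\<lambda>n. f n + g n) \<le> 2 * nrm f + 2 * nrm g" .
qed

lemma inH_scale: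
  assumes "in_H f"
  shows "in_H (\<lambda>n. c * f n)" "nrm (\<lambda>n. c * f n) = (cmod c)\<^sup>2 * nrm f"
proof -
  have e: "\<And>n. (cmod (c * f n))\<^sup>2 = (cmod c)\<^sup>2 * (cmod (f n))\<^sup>2"
    by (simp add: norm_mult power_mult_distrib)
  show "in_H (\<lambda>n. c * f n)" using summable_mult[of "\<lambda>n. (cmod (f n))\<^sup>2" "(cmod c)\<^sup>2"] assms unfolding in_H_def e by simp
  show "nrm (\<lambda>n. c * f n) = (cmod c)\<^sup>2 * nrm f"
    using assms unfolding nrm_def in_H_def e by (simp add: suminf_mult)
qed

lemma inH_diff:
  assumes "in_H f" "in_H g"
  shows "in_H (\<lambda>n. f n - g n)" "nrm (\<lambda>n. f n - g n) \<le> 2 * nrm f + 2 * nrm g"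
proof -
  have g': "in_H (\<lambda>n. (-1) * g n)" "nrm (\<lambda>n. (-1) * g n) = nrm g"
    using inH_scale[OF assms(2), of "-1"] by auto
  have e: "(\<lambda>n. f n - g n) = (\<lambda>n. f n + (-1) * g n)" by auto
  show "in_H (\<lambda>n. f n - g n)" unfolding e by (rule inH_add(1)[OF assms(1) g'(1)])
  show "nrm (\<lambda>n. f n - g n) \<le> 2 * nrm f + 2 * nrm g"
    unfolding e using inH_add(2)[OF assms(1) g'(1)] g'(2) by simp
qed

lemma inH_zero: "in_H (\<lambda>n. 0)" unfolding in_H_def by simp

lemma nrm_nonneg: "in_H f \<Longrightarrow> nrm f \<ge> 0"
  unfolding nrm_def in_H_def by (intro suminf_nonneg) auto

lemma inH_sum:
  assumes "finite I" "\<And>i. i \<in> I \<Longrightarrow> in_H (g i)"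
  shows "in_H (\<lambda>n. \<Sum>i\<in>I. g i n)"
  using assms
proof (induction I rule: finite_induct)
  case empty then show ?case by (simp add: inH_zero)
next
  case (insert x F)
  then show ?case using inH_add[of "g x" "\<lambda>n. \<Sum>i\<in>F. g i n"] by simp
qed

lemma cspan_zero: "(\<lambda>n. 0) \<in> cspan A"
  unfolding cspan_def by (rule CollectI, rule exI[of _ "{}"]) auto

lemma cspan_base: "x \<in> A \<Longrightarrow> x \<in> cspan A"
  unfolding cspan_def by (rule CollectI, rule exI[of _ "{x}"], rule exI[of _ "\<lambda>_. 1"]) auto

lemma cspan_add:
  assumes "x \<in> cspan A" "y \<in> cspan A"
  shows "(\<lambda>n. x n + y n) \<in> cspan A"
proof -
  obtain F c where F: "finite F" "F \<subseteq> A" "x = (\<lambda>n. \<Sum>v\<in>F. c v * v n)"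
    using assms(1) unfolding cspan_def by auto
  obtain G d where G: "finite G" "G \<subseteq> A" "y = (\<lambda>n. \<Sum>v\<in>G. d v * v n)"
    using assms(2) unfolding cspan_def by auto
  define e where "e v = (if v \<in> F then c v else 0) + (if v \<in> G then d v else 0)" for v
  have "(\<lambda>n. x n + y n) = (\<lambda>n. \<Sum>v\<in>F \<union> G. e v * v n)"
  proof
    fix n
    have "(\<Sum>v\<in>F \<union> G. e v * v n) = (\<Sum>v\<in>F \<union> G. (if v \<in> F then c v * v n else 0))
          + (\<Sum>v\<in>F \<union> G. (if v \<in> G then d v * v n else 0))"
    proof -
      have "\<And>v. e v * v n = (if v \<in> F then c v * v n else 0) + (if v \<in> G then d v * v n else 0)"
        unfolding e_def by (simp add: distrib_right)
      then show ?thesis by (simp add: sum.distrib)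
    qed
    also have "\<dots> = (\<Sum>v\<in>F. c v * v n) + (\<Sum>v\<in>G. d v * v n)"
    proof -
      have i1: "(F \<union> G) \<inter> F = F" "(F \<union> G) \<inter> G = G" by blast+
      have fin: "finite (F \<union> G)" using F G by simp
      show ?thesis
        using sum.inter_restrict[OF fin, of "\<lambda>v. c v * v n" F]
              sum.inter_restrict[OF fin, of "\<lambda>v. d v * v n" G]
        unfolding i1 by simp
    qed
    finally show "x n + y n = (\<Sum>v\<in>F \<union> G. e v * v n)" using F G by simp
  qed
  then show ?thesis unfolding cspan_def
    apply (intro CollectI exI[of _ "F \<union> G"] exI[of _ e])
    using F G by simp
qed

lemma cspan_scale:
  assumes "x \<in> cspan A"
  shows "(\<lambda>n. a * x n) \<in> cspan A"
proof -
  obtain F c where F: "finite F" "F \<subseteq> A" "x = (\<lambda>n. \<Sum>v\<in>F. c v * v n)"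
    using assms(1) unfolding cspan_def by auto
  have "(\<lambda>n. a * x n) = (\<lambda>n. \<Sum>v\<in>F. (a * c v) * v n)"
  proof
    fix n show "a * x n = (\<Sum>v\<in>F. (a * c v) * v n)"
      unfolding F(3) sum_distrib_left by (rule sum.cong) auto
  qed
  then show ?thesis unfolding cspan_def
    apply (intro CollectI exI[of _ F] exI[of _ "\<lambda>v. a * c v"])
    using F by simp
qed

definition SS :: "real \<Rightarrow> nat \<Rightarrow> fock set" where
  "SS \<alpha> k = {(\<lambda>n. x n + y n) | x y. x \<in> Ea \<alpha> k \<and> y \<in> Esharp \<alpha> k}"

lemma SS_zero: "(\<lambda>n. 0) \<in> SS \<alpha> k"
  unfolding SS_def
  apply (rule CollectI, rule exI[of _ "\<lambda>n. 0"], rule exI[of _ "\<lambda>n. 0"])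
  using cspan_zero unfolding Ea_def Esharp_def by simp

lemma Ea_SS: "x \<in> Ea \<alpha> k \<Longrightarrow> x \<in> SS \<alpha> k"
  unfolding SS_def
  apply (rule CollectI, rule exI[of _ x], rule exI[of _ "\<lambda>n. 0"])
  using cspan_zero unfolding Esharp_def by simp

lemma Esharp_SS: "y \<in> Esharp \<alpha> k \<Longrightarrow> y \<in> SS \<alpha> k"
  unfolding SS_def
  apply (rule CollectI, rule exI[of _ "\<lambda>n. 0"], rule exI[of _ y])
  using cspan_zero unfolding Ea_def by simp

lemma SS_intro:
  assumes "x \<in> Ea \<alpha> k" "y \<in> Esharp \<alpha> k" "f = (\<lambda>n. x n + y n)"
  shows "f \<in> SS \<alpha> k"
  unfolding SS_def
  apply (rule CollectI, rule exI[of _ x], rule exI[of _ y])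
  using assms by simp

lemma SS_add:
  assumes "u \<in> SS \<alpha> k" "w \<in> SS \<alpha> k"
  shows "(\<lambda>n. u n + w n) \<in> SS \<alpha> k"
proof -
  obtain x y where xy: "x \<in> Ea \<alpha> k" "y \<in> Esharp \<alpha> k" "u = (\<lambda>n. x n + y n)"
    using assms(1) unfolding SS_def by auto
  obtain x' y' where xy': "x' \<in> Ea \<alpha> k" "y' \<in> Esharp \<alpha> k" "w = (\<lambda>n. x' n + y' n)"
    using assms(2) unfolding SS_def by auto
  have "(\<lambda>n. u n + w n) = (\<lambda>n. (\<lambda>n. x n + x' n) n + (\<lambda>n. y n + y' n) n)"
    using xy xy' by (auto simp: algebra_simps)
  moreover have "(\<lambda>n. x n + x' n) \<in> Ea \<alpha> k" using xy(1) xy'(1) unfolding Ea_def by (rule cspan_add)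
  moreover have "(\<lambda>n. y n + y' n) \<in> Esharp \<alpha> k" using xy(2) xy'(2) unfolding Esharp_def by (rule cspan_add)
  ultimately show ?thesis by (intro SS_intro)
qed

lemma SS_scale:
  assumes "u \<in> SS \<alpha> k"
  shows "(\<lambda>n. a * u n) \<in> SS \<alpha> k"
proof -
  obtain x y where xy: "x \<in> Ea \<alpha> k" "y \<in> Esharp \<alpha> k" "u = (\<lambda>n. x n + y n)"
    using assms(1) unfolding SS_def by auto
  have "(\<lambda>n. a * u n) = (\<lambda>n. (\<lambda>n. a * x n) n + (\<lambda>n. a * y n) n)"
    using xy by (auto simp: algebra_simps)
  moreover have "(\<lambda>n. a * x n) \<in> Ea \<alpha> k" using xy(1) unfolding Ea_def by (rule cspan_scale)
  moreover have "(\<lambda>n. a * y n) \<in> Esharp \<alpha> k" using xy(2) unfolding Esharp_def by (rule cspan_scale)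
  ultimately show ?thesis by (intro SS_intro)
qed

lemma SS_diff:
  assumes "u \<in> SS \<alpha> k" "w \<in> SS \<alpha> k"
  shows "(\<lambda>n. u n - w n) \<in> SS \<alpha> k"
proof -
  have "(\<lambda>n. u n - w n) = (\<lambda>n. u n + (\<lambda>n. (-1) * w n) n)" by auto
  then show ?thesis using SS_add[OF assms(1) SS_scale[OF assms(2), of "-1"]] by simp
qed

lemma SS_sum:
  assumes "finite I" "\<And>i. i \<in> I \<Longrightarrow> g i \<in> SS \<alpha> k"
  shows "(\<lambda>n. \<Sum>i\<in>I. g i n) \<in> SS \<alpha> k"
  using assms
proof (induction I rule: finite_induct)
  case empty then show ?case by (simp add: SS_zero)
next
  case (insert x F)
  then show ?case using SS_add[of "g x" \<alpha> k "\<lambda>n. \<Sum>i\<in>F. g i n"] by simp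
qed

definition VV :: "real \<Rightarrow> nat \<Rightarrow> fock set" where
  "VV \<alpha> k = {\<psi>. in_H \<psi> \<and> (\<forall>\<delta>>0. \<exists>\<phi>\<in>SS \<alpha> k. in_H \<phi> \<and> nrm (\<lambda>n. \<psi> n - \<phi> n) < \<delta>)}"

lemma SS_VV: "u \<in> SS \<alpha> k \<Longrightarrow> in_H u \<Longrightarrow> u \<in> VV \<alpha> k"
  unfolding VV_def nrm_def by (auto intro!: bexI[of _ u])

lemma VV_inH: "u \<in> VV \<alpha> k \<Longrightarrow> in_H u" unfolding VV_def by auto

lemma VV_approx: "u \<in> VV \<alpha> k \<Longrightarrow> \<delta> > 0 \<Longrightarrow> \<exists>\<phi>\<in>SS \<alpha> k. in_H \<phi> \<and> nrm (\<lambda>n. u n - \<phi> n) < \<delta>"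
  unfolding VV_def by auto

lemma VV_limit:
  assumes "in_H \<psi>" "\<And>\<delta>. \<delta> > 0 \<Longrightarrow> \<exists>\<zeta>\<in>VV \<alpha> k. nrm (\<lambda>n. \<psi> n - \<zeta> n) < \<delta>"
  shows "\<psi> \<in> VV \<alpha> k"
  unfolding VV_def
proof (intro CollectI conjI allI impI assms(1))
  fix \<delta> :: real assume "\<delta> > 0"
  then obtain \<zeta> where \<zeta>: "\<zeta> \<in> VV \<alpha> k" "nrm (\<lambda>n. \<psi> n - \<zeta> n) < \<delta>/4"
    using assms(2)[of "\<delta>/4"] by auto
  then obtain \<phi> where \<phi>: "\<phi> \<in> SS \<alpha> k" "in_H \<phi>" "nrm (\<lambda>n. \<zeta> n - \<phi> n) < \<delta>/4"
    using VV_approx[of \<zeta> \<alpha> k "\<delta>/4"] \<open>\<delta> > 0\<close> by auto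
  have h1: "in_H (\<lambda>n. \<psi> n - \<zeta> n)" by (rule inH_diff(1)[OF assms(1) VV_inH[OF \<zeta>(1)]])
  have h2: "in_H (\<lambda>n. \<zeta> n - \<phi> n)" by (rule inH_diff(1)[OF VV_inH[OF \<zeta>(1)] \<phi>(2)])
  have "(\<lambda>n. \<psi> n - \<phi> n) = (\<lambda>n. (\<lambda>n. \<psi> n - \<zeta> n) n + (\<lambda>n. \<zeta> n - \<phi> n) n)" by auto
  then have "nrm (\<lambda>n. \<psi> n - \<phi> n) \<le> 2 * nrm (\<lambda>n. \<psi> n - \<zeta> n) + 2 * nrm (\<lambda>n. \<zeta> n - \<phi> n)"
    using inH_add(2)[OF h1 h2] by simp
  also have "\<dots> < \<delta>" using \<zeta>(2) \<phi>(3) by simp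
  finally show "\<exists>\<phi>\<in>SS \<alpha> k. in_H \<phi> \<and> nrm (\<lambda>n. \<psi> n - \<phi> n) < \<delta>"
    using \<phi>(1,2) by (intro bexI[of _ \<phi>] conjI)
qed

lemma VV_add:
  assumes "u \<in> VV \<alpha> k" "w \<in> VV \<alpha> k"
  shows "(\<lambda>n. u n + w n) \<in> VV \<alpha> k"
  unfolding VV_def
proof (intro CollectI conjI allI impI)
  show "in_H (\<lambda>n. u n + w n)" by (rule inH_add(1)[OF VV_inH[OF assms(1)] VV_inH[OF assms(2)]])
  fix \<delta> :: real assume "\<delta> > 0"
  then obtain \<phi> where \<phi>: "\<phi> \<in> SS \<alpha> k" "in_H \<phi>" "nrm (\<lambda>n. u n - \<phi> n) < \<delta>/4"
    using VV_approx[OF assms(1), of "\<delta>/4"] \<open>\<delta> > 0\<close> by auto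
  obtain \<phi>' where \<phi>': "\<phi>' \<in> SS \<alpha> k" "in_H \<phi>'" "nrm (\<lambda>n. w n - \<phi>' n) < \<delta>/4"
    using VV_approx[OF assms(2), of "\<delta>/4"] \<open>\<delta> > 0\<close> by auto
  have h1: "in_H (\<lambda>n. u n - \<phi> n)" by (rule inH_diff(1)[OF VV_inH[OF assms(1)] \<phi>(2)])
  have h2: "in_H (\<lambda>n. w n - \<phi>' n)" by (rule inH_diff(1)[OF VV_inH[OF assms(2)] \<phi>'(2)])
  have "(\<lambda>n. u n + w n - (\<phi> n + \<phi>' n)) = (\<lambda>n. (\<lambda>n. u n - \<phi> n) n + (\<lambda>n. w n - \<phi>' n) n)" by auto
  then have "nrm (\<lambda>n. u n + w n - (\<phi> n + \<phi>' n)) \<le> 2 * nrm (\<lambda>n. u n - \<phi> n) + 2 * nrm (\<lambda>n. w n - \<phi>' n)"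
    using inH_add(2)[OF h1 h2] by simp
  also have "\<dots> < \<delta>" using \<phi>(3) \<phi>'(3) by simp
  finally have "nrm (\<lambda>n. u n + w n - (\<phi> n + \<phi>' n)) < \<delta>" .
  then show "\<exists>\<phi>\<in>SS \<alpha> k. in_H \<phi> \<and> nrm (\<lambda>n. u n + w n - \<phi> n) < \<delta>"
    using SS_add[OF \<phi>(1) \<phi>'(1)] inH_add(1)[OF \<phi>(2) \<phi>'(2)]
    by (intro bexI[of _ "\<lambda>n. \<phi> n + \<phi>' n"] conjI) auto
qed

lemma VV_scale:
  assumes "u \<in> VV \<alpha> k"
  shows "(\<lambda>n. a * u n) \<in> VV \<alpha> k"
  unfolding VV_def
proof (intro CollectI conjI allI impI)
  show "in_H (\<lambda>n. a * u n)" by (rule inH_scale(1)[OF VV_inH[OF assms]])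
  fix \<delta> :: real assume "\<delta> > 0"
  have "(cmod a)\<^sup>2 + 1 > 0" by (simp add: add_nonneg_pos)
  then have pos: "\<delta> / ((cmod a)\<^sup>2 + 1) > 0" using \<open>\<delta> > 0\<close> by simp
  then obtain \<phi> where \<phi>: "\<phi> \<in> SS \<alpha> k" "in_H \<phi>" "nrm (\<lambda>n. u n - \<phi> n) < \<delta> / ((cmod a)\<^sup>2 + 1)"
    using VV_approx[OF assms(1) pos] by auto
  have h1: "in_H (\<lambda>n. u n - \<phi> n)" by (rule inH_diff(1)[OF VV_inH[OF assms(1)] \<phi>(2)])
  have "(\<lambda>n. a * u n - a * \<phi> n) = (\<lambda>n. a * (\<lambda>n. u n - \<phi> n) n)" by (auto simp: algebra_simps)
  then have "nrm (\<lambda>n. a * u n - a * \<phi> n) = (cmod a)\<^sup>2 * nrm (\<lambda>n. u n - \<phi> n)"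
    using inH_scale(2)[OF h1] by simp
  also have "\<dots> \<le> ((cmod a)\<^sup>2 + 1) * nrm (\<lambda>n. u n - \<phi> n)"
    by (intro mult_right_mono nrm_nonneg h1) auto
  also have "\<dots> < \<delta>" using \<phi>(3) by (simp add: field_simps add_pos_nonneg)
  finally have "nrm (\<lambda>n. a * u n - a * \<phi> n) < \<delta>" .
  then show "\<exists>\<phi>\<in>SS \<alpha> k. in_H \<phi> \<and> nrm (\<lambda>n. a * u n - \<phi> n) < \<delta>"
    using SS_scale[OF \<phi>(1)] inH_scale(1)[OF \<phi>(2)]
    by (intro bexI[of _ "\<lambda>n. a * \<phi> n"] conjI) auto
qed

lemma VV_zero: "(\<lambda>n. 0) \<in> VV \<alpha> k"
  by (rule SS_VV[OF SS_zero inH_zero])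

lemma VV_sum:
  assumes "finite I" "\<And>i. i \<in> I \<Longrightarrow> g i \<in> VV \<alpha> k"
  shows "(\<lambda>n. \<Sum>i\<in>I. g i n) \<in> VV \<alpha> k"
  using assms
proof (induction I rule: finite_induct)
  case empty then show ?case by (simp add: VV_zero)
next
  case (insert x F)
  then show ?case using VV_add[of "g x" \<alpha> k "\<lambda>n. \<Sum>i\<in>F. g i n"] by simp
qed

lemma VV_diff:
  assumes "u \<in> VV \<alpha> k" "w \<in> VV \<alpha> k"
  shows "(\<lambda>n. u n - w n) \<in> VV \<alpha> k"
proof -
  have "(\<lambda>n. u n - w n) = (\<lambda>n. u n + (\<lambda>n. (-1) * w n) n)" by auto
  then show ?thesis using VV_add[OF assms(1) VV_scale[OF assms(2), of "-1"]] by simp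
qed

lemma cre_pow:
  "(cre ^^ p) f n = (if p \<le> n then complex_of_real (sqrt (fact n / fact (n - p))) * f (n - p) else 0)"
proof (induction p arbitrary: n)
  case 0
  then show ?case by simp
next
  case (Suc p)
  show ?case
  proof (cases n)
    case 0
    then show ?thesis by (simp add: cre_def)
  next
    case (Suc m)
    have "(cre ^^ Suc p) f n = complex_of_real (sqrt (real (Suc m))) * (cre ^^ p) f m"
      using Suc by (simp add: cre_def)
    also have "\<dots> = (if Suc p \<le> n then complex_of_real (sqrt (fact n / fact (n - Suc p))) * f (n - Suc p) else 0)"
    proof (cases "p \<le> m")
      case True
      have "sqrt (real (Suc m)) * sqrt (fact m / fact (m - p)) = sqrt (fact (Suc m) / fact (m - p))"
        by (simp add: real_sqrt_mult[symmetric] fact_Suc del: of_nat_Suc)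
      then show ?thesis using True Suc \<open>n = Suc m\<close>
        by (simp add: Suc.IH of_real_mult[symmetric] mult.assoc del: of_real_mult fact_Suc)
    next
      case False
      then show ?thesis using Suc \<open>n = Suc m\<close> by (simp add: Suc.IH)
    qed
    finally show ?thesis .
  qed
qed

lemma ann_pow:
  "(ann ^^ p) f n = complex_of_real (sqrt (fact (n + p) / fact n)) * f (n + p)"
proof (induction p arbitrary: n)
  case 0
  then show ?case by simp
next
  case (Suc p)
  have "(ann ^^ Suc p) f n = complex_of_real (sqrt (real (Suc n))) * (ann ^^ p) f (Suc n)"
    by (simp add: ann_def)
  also have "\<dots> = complex_of_real (sqrt (real (Suc n)) * sqrt (fact (Suc n + p) / fact (Suc n))) * f (Suc n + p)"
    by (simp add: Suc.IH mult.assoc)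
  also have "sqrt (real (Suc n)) * sqrt (fact (Suc n + p) / fact (Suc n)) = sqrt (fact (n + Suc p) / fact n)"
  proof -
    have "real (Suc n) * (fact (Suc n + p) / fact (Suc n)) = fact (n + Suc p) / fact n"
      by (simp add: fact_Suc field_simps del: of_nat_Suc)
    then show ?thesis by (simp add: real_sqrt_mult[symmetric])
  qed
  finally show ?case by simp
qed

lemma cre_pow_lin:
  "(cre ^^ p) (\<lambda>n. a n + c * b n) = (\<lambda>n. (cre ^^ p) a n + c * (cre ^^ p) b n)"
  by (auto simp: cre_pow algebra_simps)

lemma cre_pow_scale:
  "(cre ^^ p) (\<lambda>n. c * b n) = (\<lambda>n. c * (cre ^^ p) b n)"
  by (auto simp: cre_pow algebra_simps)

lemma cre_pow_sum:
  "(cre ^^ p) (\<lambda>n. \<Sum>i\<in>I. g i n) = (\<lambda>n. \<Sum>i\<in>I. (cre ^^ p) (g i) n)"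
  by (auto simp: cre_pow sum_distrib_left)

lemma cre_pow_add: "(cre ^^ p) ((cre ^^ q) f) = (cre ^^ (p + q)) f"
  by (simp add: funpow_add)

definition ffn :: "nat \<Rightarrow> nat \<Rightarrow> real" where
  "ffn n i = fact i * real (n choose i)"

lemma ffn_eq: "i \<le> n \<Longrightarrow> ffn n i = fact n / fact (n - i)"
  unfolding ffn_def by (simp add: binomial_fact field_simps)

lemma ffn_zero: "n < i \<Longrightarrow> ffn n i = 0"
  unfolding ffn_def by simp

fun Qf :: "nat \<Rightarrow> nat \<Rightarrow> nat \<Rightarrow> real" where
  "Qf k 0 n = ffn n k"
| "Qf k (Suc s) n = Qf k s (n + k) - Qf k s n"

lemma sqrt_fact_sq: "b \<le> a \<Longrightarrow> complex_of_real (sqrt (fact a / fact b)) * complex_of_real (sqrt (fact a / fact b)) = complex_of_real (fact a / fact b)"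
  by (simp add: of_real_mult[symmetric] del: of_real_mult)

lemma comm1:
  "comm (opL \<alpha> k) (opLdag \<alpha> k) f n = complex_of_real (ffn (n + k) k - ffn n k) * f n"
proof -
  define c where "c = complex_of_real (\<alpha> ^ k)"
  define A where "A = complex_of_real (sqrt (fact (n + k) / fact n))"
  define B where "B = complex_of_real (sqrt (fact n / fact (n - k)))"
  have AA: "A * A = complex_of_real (ffn (n + k) k)"
    unfolding A_def by (simp add: ffn_eq of_real_mult[symmetric] del: of_real_mult)
  have e1: "opL \<alpha> k (opLdag \<alpha> k f) n = A * (A * f n - c * f (n + k)) - c * ((cre ^^ k) f n - c * f n)"
    unfolding opL_def opLdag_def ann_pow cre_pow A_def c_def by simp
  show ?thesis
  proof (cases "k \<le> n")
    case True
    have BB: "B * B = complex_of_real (ffn n k)"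
      unfolding B_def using True by (simp add: ffn_eq of_real_mult[symmetric] del: of_real_mult)
    have c1: "(cre ^^ k) f n = B * f (n - k)" unfolding cre_pow B_def using True by simp
    have e2: "opLdag \<alpha> k (opL \<alpha> k f) n = B * (B * f n - c * f (n - k)) - c * (A * f (n + k) - c * f n)"
      unfolding opL_def opLdag_def ann_pow cre_pow A_def B_def c_def using True by simp
    have "A * (A * f n - c * f (n + k)) - c * (B * f (n - k) - c * f n) - (B * (B * f n - c * f (n - k)) - c * (A * f (n + k) - c * f n)) = (A * A - B * B) * f n"
      by (simp add: algebra_simps)
    then show ?thesis unfolding comm_def e1 e2 c1 AA BB by (simp add: of_real_diff)
  next
    case False
    have c1: "(cre ^^ k) f n = 0" unfolding cre_pow using False by simp
    have e2: "opLdag \<alpha> k (opL \<alpha> k f) n = - c * (A * f (n + k) - c * f n)"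
      unfolding opL_def opLdag_def ann_pow cre_pow A_def c_def using False by simp
    have "A * (A * f n - c * f (n + k)) - c * (0 - c * f n) - (- c * (A * f (n + k) - c * f n)) = (A * A) * f n"
      by (simp add: algebra_simps)
    then show ?thesis unfolding comm_def e1 e2 c1 AA using False by (simp add: ffn_zero)
  qed
qed

lemma diag_cre:
  "(\<lambda>m. complex_of_real (Q m) * (cre ^^ k) f m) = (cre ^^ k) (\<lambda>m. complex_of_real (Q (m + k)) * f m)"
  by (auto simp: cre_pow)

lemma rcomm_formula:
  assumes "1 \<le> s"
  shows "rcomm (opL \<alpha> k) (opLdag \<alpha> k) s f = (cre ^^ (k * (s - 1))) (\<lambda>m. complex_of_real (Qf k s m) * f m)"
  using assms
proof (induction s arbitrary: f rule: nat_induct_at_least)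
  case base
  show ?case by (auto simp: comm1)
next
  case (Suc s)
  define p where "p = k * (s - 1)"
  define c where "c = complex_of_real (\<alpha> ^ k)"
  have pk: "k * (Suc s - 1) = p + k" and pk2: "k + p = p + k"
    unfolding p_def using Suc.hyps by (auto simp: algebra_simps)
  have Ldag: "\<And>g. opLdag \<alpha> k g = (\<lambda>n. (cre ^^ k) g n + (- c) * g n)"
    unfolding opLdag_def c_def by auto
  have "rcomm (opL \<alpha> k) (opLdag \<alpha> k) (Suc s) f
      = (\<lambda>n. rcomm (opL \<alpha> k) (opLdag \<alpha> k) s (opLdag \<alpha> k f) n - opLdag \<alpha> k (rcomm (opL \<alpha> k) (opLdag \<alpha> k) s f) n)"
    by (simp add: comm_def)
  also have "\<dots> = (\<lambda>n. (cre ^^ p) (\<lambda>m. complex_of_real (Qf k s m) * opLdag \<alpha> k f m) n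
        - opLdag \<alpha> k ((cre ^^ p) (\<lambda>m. complex_of_real (Qf k s m) * f m)) n)"
    unfolding Suc.IH p_def ..
  also have "(\<lambda>m. complex_of_real (Qf k s m) * opLdag \<alpha> k f m)
      = (\<lambda>m. (cre ^^ k) (\<lambda>m. complex_of_real (Qf k s (m + k)) * f m) m + (- c) * (complex_of_real (Qf k s m) * f m))"
    unfolding Ldag diag_cre[symmetric] by (auto simp: algebra_simps)
  also have "(\<lambda>n. (cre ^^ p) (\<lambda>m. (cre ^^ k) (\<lambda>m. complex_of_real (Qf k s (m + k)) * f m) m + (- c) * (complex_of_real (Qf k s m) * f m)) n
        - opLdag \<alpha> k ((cre ^^ p) (\<lambda>m. complex_of_real (Qf k s m) * f m)) n)
      = (\<lambda>n. (cre ^^ (p + k)) (\<lambda>m. complex_of_real (Qf k s (m + k)) * f m) n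
        - (cre ^^ (p + k)) (\<lambda>m. complex_of_real (Qf k s m) * f m) n)"
    unfolding cre_pow_lin Ldag cre_pow_add pk2 by (auto simp: algebra_simps)
  also have "\<dots> = (cre ^^ (p + k)) (\<lambda>m. complex_of_real (Qf k (Suc s) m) * f m)"
    using cre_pow_lin[of "p + k" "\<lambda>m. complex_of_real (Qf k s (m + k)) * f m" "-1" "\<lambda>m. complex_of_real (Qf k s m) * f m"]
    by (auto simp: algebra_simps)
  finally show ?case unfolding pk .
qed

definition cmb :: "nat \<Rightarrow> (nat \<Rightarrow> real) set" where
  "cmb m = {Q. \<exists>\<gamma>. \<forall>n. Q n = (\<Sum>t<m. \<gamma> t * ffn n t)}"

lemma cmb_mono:
  assumes "m \<le> m'" "Q \<in> cmb m"
  shows "Q \<in> cmb m'"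
proof -
  obtain \<gamma> where g: "\<And>n. Q n = (\<Sum>t<m. \<gamma> t * ffn n t)" using assms(2) unfolding cmb_def by auto
  have "\<And>n. Q n = (\<Sum>t<m'. (if t < m then \<gamma> t else 0) * ffn n t)"
    unfolding g using assms(1)
    by (intro sum.mono_neutral_cong_right[symmetric]) auto
  then show ?thesis unfolding cmb_def by (intro CollectI exI[of _ "\<lambda>t. if t < m then \<gamma> t else 0"]) auto
qed

lemma cmb_zero: "(\<lambda>n. 0) \<in> cmb m"
  unfolding cmb_def by (intro CollectI exI[of _ "\<lambda>_. 0"]) simp

lemma cmb_add:
  assumes "P \<in> cmb m" "Q \<in> cmb m"
  shows "(\<lambda>n. P n + Q n) \<in> cmb m"
proof -
  obtain \<gamma> where g: "\<And>n. P n = (\<Sum>t<m. \<gamma> t * ffn n t)" using assms(1) unfolding cmb_def by auto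
  obtain \<beta> where b: "\<And>n. Q n = (\<Sum>t<m. \<beta> t * ffn n t)" using assms(2) unfolding cmb_def by auto
  have "\<And>n. P n + Q n = (\<Sum>t<m. (\<gamma> t + \<beta> t) * ffn n t)"
    unfolding g b by (simp add: sum.distrib distrib_right)
  then show ?thesis unfolding cmb_def by (intro CollectI exI[of _ "\<lambda>t. \<gamma> t + \<beta> t"]) simp
qed

lemma cmb_scale:
  assumes "Q \<in> cmb m"
  shows "(\<lambda>n. a * Q n) \<in> cmb m"
proof -
  obtain \<beta> where b: "\<And>n. Q n = (\<Sum>t<m. \<beta> t * ffn n t)" using assms unfolding cmb_def by auto
  have "\<And>n. a * Q n = (\<Sum>t<m. (a * \<beta> t) * ffn n t)"
    unfolding b by (simp add: sum_distrib_left mult.assoc)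
  then show ?thesis unfolding cmb_def by (intro CollectI exI[of _ "\<lambda>t. a * \<beta> t"]) simp
qed

lemma cmb_sum:
  assumes "finite I" "\<And>i. i \<in> I \<Longrightarrow> g i \<in> cmb m"
  shows "(\<lambda>n. \<Sum>i\<in>I. g i n) \<in> cmb m"
  using assms
proof (induction I rule: finite_induct)
  case empty then show ?case by (simp add: cmb_zero)
next
  case (insert x F)
  then show ?case using cmb_add[of "g x" m "\<lambda>n. \<Sum>i\<in>F. g i n"] by simp
qed

lemma vander_ffn:
  "ffn (n + k) i = (\<Sum>t\<le>i. real (i choose t) * ffn k (i - t) * ffn n t)"
proof -
  have "ffn (n + k) i = fact i * (\<Sum>t\<le>i. real (n choose t) * real (k choose (i - t)))"
    unfolding ffn_def vandermonde[of n k i, symmetric] by simp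
  also have "\<dots> = (\<Sum>t\<le>i. real (i choose t) * ffn k (i - t) * ffn n t)"
    unfolding sum_distrib_left
  proof (rule sum.cong[OF refl])
    fix t assume "t \<in> {..i}"
    then have "t \<le> i" by simp
    then have "real (fact t * fact (i - t) * (i choose t)) = real (fact i)"
      using binomial_fact_lemma[of t i] by simp
    then have eq: "(fact i :: real) = fact t * fact (i - t) * real (i choose t)"
      unfolding of_nat_mult of_nat_fact by simp
    show "fact i * (real (n choose t) * real (k choose (i - t))) = real (i choose t) * ffn k (i - t) * ffn n t"
      unfolding ffn_def eq by (simp add: algebra_simps)
  qed
  finally show ?thesis .
qed

lemma delta_ffn_sum:
  "ffn (n + k) i - ffn n i = (\<Sum>t<i. real (i choose t) * ffn k (i - t) * ffn n t)"
  unfolding vander_ffn lessThan_Suc_atMost[symmetric] by (simp add: ffn_def)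

lemma delta_ffn_cmb: "(\<lambda>n. ffn (n + k) i - ffn n i) \<in> cmb i"
  unfolding cmb_def delta_ffn_sum
  by (intro CollectI exI[of _ "\<lambda>t. real (i choose t) * ffn k (i - t)"]) simp

lemma delta_ffn_lead:
  assumes "1 \<le> i"
  shows "\<exists>R\<in>cmb (i - 1). \<forall>n. ffn (n + k) i - ffn n i = real i * real k * ffn n (i - 1) + R n"
proof -
  obtain j where j: "i = Suc j" using assms by (cases i) auto
  have "\<And>n. ffn (n + k) i - ffn n i = real i * real k * ffn n (i - 1) + (\<Sum>t<j. real (i choose t) * ffn k (i - t) * ffn n t)"
    unfolding delta_ffn_sum j by (simp add: ffn_def)
  moreover have "(\<lambda>n. \<Sum>t<j. real (i choose t) * ffn k (i - t) * ffn n t) \<in> cmb (i - 1)"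
    unfolding cmb_def by (intro CollectI exI[of _ "\<lambda>t. real (i choose t) * ffn k (i - t)"]) (simp add: j)
  ultimately show ?thesis by (intro bexI[of _ "\<lambda>n. \<Sum>t<j. real (i choose t) * ffn k (i - t) * ffn n t"]) auto
qed

lemma delta_cmb:
  assumes "Q \<in> cmb m"
  shows "(\<lambda>n. Q (n + k) - Q n) \<in> cmb (m - 1)"
proof -
  obtain \<beta> where b: "\<And>n. Q n = (\<Sum>t<m. \<beta> t * ffn n t)" using assms unfolding cmb_def by auto
  have "(\<lambda>n. Q (n + k) - Q n) = (\<lambda>n. \<Sum>t<m. (\<lambda>n. \<beta> t * (ffn (n + k) t - ffn n t)) n)"
    unfolding b by (auto simp: sum_subtractf[symmetric] algebra_simps)
  also have "\<dots> \<in> cmb (m - 1)"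
  proof (rule cmb_sum)
    fix t assume "t \<in> {..<m}"
    then have "t \<le> m - 1" by auto
    then show "(\<lambda>n. \<beta> t * (ffn (n + k) t - ffn n t)) \<in> cmb (m - 1)"
      by (intro cmb_scale cmb_mono[OF _ delta_ffn_cmb])
  qed simp
  finally show ?thesis .
qed

definition lead :: "nat \<Rightarrow> real \<Rightarrow> (nat \<Rightarrow> real) \<Rightarrow> bool" where
  "lead d c Q \<longleftrightarrow> (\<exists>R\<in>cmb d. \<forall>n. Q n = c * ffn n d + R n)"

lemma delta_lead:
  assumes "1 \<le> d" "lead d c Q"
  shows "lead (d - 1) (c * real d * real k) (\<lambda>n. Q (n + k) - Q n)"
proof -
  obtain R where R: "R \<in> cmb d" "\<And>n. Q n = c * ffn n d + R n" using assms(2) unfolding lead_def by auto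
  obtain R1 where R1: "R1 \<in> cmb (d - 1)" "\<And>n. ffn (n + k) d - ffn n d = real d * real k * ffn n (d - 1) + R1 n"
    using delta_ffn_lead[OF assms(1), of k] by auto
  have "\<And>n. Q (n + k) - Q n = (c * real d * real k) * ffn n (d - 1) + (c * R1 n + (R (n + k) - R n))"
  proof -
    fix n
    have "Q (n + k) - Q n = c * (ffn (n + k) d - ffn n d) + (R (n + k) - R n)"
      unfolding R(2) by (simp add: algebra_simps)
    then show "Q (n + k) - Q n = (c * real d * real k) * ffn n (d - 1) + (c * R1 n + (R (n + k) - R n))"
      unfolding R1(2) by (simp add: algebra_simps)
  qed
  moreover have "(\<lambda>n. c * R1 n + (R (n + k) - R n)) \<in> cmb (d - 1)"
    by (intro cmb_add cmb_scale R1(1) delta_cmb R(1))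
  ultimately show ?thesis unfolding lead_def by (intro bexI[of _ "\<lambda>n. c * R1 n + (R (n + k) - R n)"]) auto
qed

lemma Qf_lead:
  assumes "s \<le> k"
  shows "\<exists>c. c \<noteq> 0 \<and> lead (k - s) c (Qf k s)"
  using assms
proof (induction s)
  case 0
  have "lead k 1 (\<lambda>n. ffn n k)" unfolding lead_def by (intro bexI[of _ "\<lambda>n. 0"] cmb_zero) simp
  moreover have "Qf k 0 = (\<lambda>n. ffn n k)" by auto
  ultimately show ?case by (intro exI[of _ 1]) simp
next
  case (Suc s)
  then obtain c where c: "c \<noteq> 0" "lead (k - s) c (Qf k s)" by auto
  have "1 \<le> k - s" using Suc.prems by simp
  from delta_lead[OF this c(2)] have "lead (k - s - 1) (c * real (k - s) * real k) (\<lambda>n. Qf k s (n + k) - Qf k s n)"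
    by simp
  moreover have "c * real (k - s) * real k \<noteq> 0" using c(1) Suc.prems by simp
  moreover have "k - s - 1 = k - Suc s" by simp
  moreover have "(\<lambda>n. Qf k s (n + k) - Qf k s n) = Qf k (Suc s)" by auto
  ultimately show ?case by (intro exI[of _ "c * real (k - s) * real k"]) simp
qed

definition uu :: "complex \<Rightarrow> nat \<Rightarrow> fock" where
  "uu z p = (cre ^^ p) (coh z)"

lemma ffn_coh:
  "(\<lambda>m. complex_of_real (ffn m t) * coh z m) = (\<lambda>m. z ^ t * uu z t m)"
proof
  fix m
  define E where "E = exp (- (cmod z)\<^sup>2 / 2)"
  show "complex_of_real (ffn m t) * coh z m = z ^ t * uu z t m"
  proof (cases "t \<le> m")
    case True
    have a: "fact m > (0::real)" "fact (m - t) > (0::real)" by auto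
    have r: "ffn m t / sqrt (fact m) = sqrt (fact m / fact (m - t)) / sqrt (fact (m - t))"
    proof -
      have "ffn m t / sqrt (fact m) = (fact m / sqrt (fact m)) / fact (m - t)"
        using True by (simp add: ffn_eq)
      also have "\<dots> = sqrt (fact m) / fact (m - t)" by (simp add: real_div_sqrt)
      also have "\<dots> = sqrt (fact m) / (sqrt (fact (m - t)) * sqrt (fact (m - t)))"
        using a by simp
      also have "\<dots> = sqrt (fact m / fact (m - t)) / sqrt (fact (m - t))"
        by (simp add: real_sqrt_divide)
      finally show ?thesis .
    qed
    have zm: "z ^ m = z ^ t * z ^ (m - t)" using True by (simp add: power_add[symmetric])
    have "complex_of_real (ffn m t) * coh z m = complex_of_real (E * (ffn m t / sqrt (fact m))) * z ^ m"
      unfolding coh_def E_def by simp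
    also have "\<dots> = complex_of_real (E * (sqrt (fact m / fact (m - t)) / sqrt (fact (m - t)))) * (z ^ t * z ^ (m - t))"
      unfolding r zm ..
    also have "\<dots> = z ^ t * uu z t m"
      unfolding uu_def cre_pow coh_def E_def using True by simp
    finally show ?thesis .
  next
    case False
    then show ?thesis unfolding uu_def cre_pow by (simp add: ffn_zero)
  qed
qed

lemma coh_kerL:
  assumes "r < k"
  shows "coh (complex_of_real \<alpha> * cis (2 * pi / real k) ^ r) \<in> kerL \<alpha> k"
  unfolding kerL_def by (rule cspan_base) (use assms in blast)

lemma coh_alpha_kerL:
  assumes "0 < k"
  shows "coh (complex_of_real \<alpha>) \<in> kerL \<alpha> k"
  using coh_kerL[OF assms, of \<alpha>] by simp

lemma cre_k_opLdag:
  "(cre ^^ k) y = (\<lambda>n. opLdag \<alpha> k y n + complex_of_real (\<alpha> ^ k) * y n)"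
  unfolding opLdag_def by auto

lemma cre_from_opLdag:
  assumes "\<And>j. (opLdag \<alpha> k ^^ j) y \<in> SS \<alpha> k"
  shows "(cre ^^ (k * j)) y \<in> SS \<alpha> k"
  using assms
proof (induction j arbitrary: y)
  case 0
  then show ?case using "0.prems"[of 0] by simp
next
  case (Suc j)
  have IH1: "(cre ^^ (k * j)) (opLdag \<alpha> k y) \<in> SS \<alpha> k"
  proof (rule Suc.IH)
    fix i show "(opLdag \<alpha> k ^^ i) (opLdag \<alpha> k y) \<in> SS \<alpha> k"
      using Suc.prems[of "Suc i"] by (simp add: funpow_Suc_right del: funpow.simps)
  qed
  have IH2: "(cre ^^ (k * j)) y \<in> SS \<alpha> k" by (rule Suc.IH[OF Suc.prems])
  have "(cre ^^ (k * Suc j)) y = (cre ^^ (k * j)) ((cre ^^ k) y)"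
  proof -
    have "k * Suc j = k * j + k" by simp
    then show ?thesis by (simp only: funpow_add comp_def)
  qed
  also have "\<dots> = (\<lambda>n. (cre ^^ (k * j)) (opLdag \<alpha> k y) n + complex_of_real (\<alpha> ^ k) * (cre ^^ (k * j)) y n)"
    unfolding cre_k_opLdag[of k y \<alpha>] cre_pow_lin ..
  finally show ?case using SS_add[OF IH1 SS_scale[OF IH2]] by simp
qed

lemma Ea_elem:
  assumes "v \<in> kerL \<alpha> k"
  shows "(opLdag \<alpha> k ^^ j) v \<in> SS \<alpha> k"
  unfolding Ea_def by (rule Ea_SS, unfold Ea_def, rule cspan_base) (use assms in blast)

lemma Esharp_elem:
  assumes "v \<in> kerL \<alpha> k" "1 \<le> s" "s \<le> k - 1"
  shows "(opLdag \<alpha> k ^^ j) (rcomm (opL \<alpha> k) (opLdag \<alpha> k) s v) \<in> SS \<alpha> k"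
  by (rule Esharp_SS, unfold Esharp_def, rule cspan_base) (use assms in blast)

lemma uu_w_SS:
  assumes "r < k"
  shows "uu (complex_of_real \<alpha> * cis (2 * pi / real k) ^ r) (k * j) \<in> SS \<alpha> k"
  unfolding uu_def by (rule cre_from_opLdag, rule Ea_elem, rule coh_kerL[OF assms])

lemma C_SS:
  assumes "0 < k" "1 \<le> s" "s \<le> k - 1"
  shows "(cre ^^ (k * i)) (rcomm (opL \<alpha> k) (opLdag \<alpha> k) s (coh (complex_of_real \<alpha>))) \<in> SS \<alpha> k"
  by (rule cre_from_opLdag, rule Esharp_elem[OF coh_alpha_kerL[OF assms(1)] assms(2,3)])

lemma cre_pow_comb:
  "(cre ^^ P) (\<lambda>m. A * g m + (\<Sum>t\<in>I. B t * h t m)) = (\<lambda>n. A * (cre ^^ P) g n + (\<Sum>t\<in>I. B t * (cre ^^ P) (h t) n))"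
  by (auto simp: cre_pow sum_distrib_left algebra_simps)

lemma cre_uu: "(cre ^^ P) (uu z t) = uu z (P + t)"
  unfolding uu_def by (simp add: funpow_add)

lemma C_expand:
  assumes "1 \<le> s" "s \<le> k" "z \<noteq> 0"
  shows "\<exists>c \<gamma>. c \<noteq> 0 \<and> (cre ^^ q) (rcomm (opL \<alpha> k) (opLdag \<alpha> k) s (coh z))
     = (\<lambda>n. c * uu z (q + k * (s - 1) + (k - s)) n + (\<Sum>t<k - s. \<gamma> t * uu z (q + k * (s - 1) + t) n))"
proof -
  define d where "d = k - s"
  obtain c0 where c0: "c0 \<noteq> 0" "lead d c0 (Qf k s)" using Qf_lead[OF assms(2)] unfolding d_def by auto
  obtain R where R: "R \<in> cmb d" "\<And>n. Qf k s n = c0 * ffn n d + R n" using c0(2) unfolding lead_def by auto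
  obtain \<beta> where b: "\<And>n. R n = (\<Sum>t<d. \<beta> t * ffn n t)" using R(1) unfolding cmb_def by auto
  have fc: "\<And>t m. complex_of_real (ffn m t) * coh z m = z ^ t * uu z t m"
    using ffn_coh by metis
  have X: "(\<lambda>m. complex_of_real (Qf k s m) * coh z m)
     = (\<lambda>m. (complex_of_real c0 * z ^ d) * uu z d m + (\<Sum>t<d. (complex_of_real (\<beta> t) * z ^ t) * uu z t m))"
  proof
    fix m
    have "complex_of_real (Qf k s m) * coh z m
        = complex_of_real c0 * (complex_of_real (ffn m d) * coh z m) + (\<Sum>t<d. complex_of_real (\<beta> t) * (complex_of_real (ffn m t) * coh z m))"
      unfolding R(2) b by (simp add: algebra_simps sum_distrib_left sum_distrib_right)
    then show "complex_of_real (Qf k s m) * coh z m = (complex_of_real c0 * z ^ d) * uu z d m + (\<Sum>t<d. (complex_of_real (\<beta> t) * z ^ t) * uu z t m)"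
      unfolding fc by (simp add: mult.assoc)
  qed
  have "(cre ^^ q) (rcomm (opL \<alpha> k) (opLdag \<alpha> k) s (coh z))
      = (cre ^^ (q + k * (s - 1))) (\<lambda>m. complex_of_real (Qf k s m) * coh z m)"
    unfolding rcomm_formula[OF assms(1)] by (simp add: funpow_add)
  also have "\<dots> = (\<lambda>n. (complex_of_real c0 * z ^ d) * uu z (q + k * (s - 1) + d) n + (\<Sum>t<d. (complex_of_real (\<beta> t) * z ^ t) * uu z (q + k * (s - 1) + t) n))"
    unfolding X cre_pow_comb cre_uu ..
  finally show ?thesis unfolding d_def
    using c0(1) assms(3)
    by (intro exI[of _ "complex_of_real c0 * z ^ (k - s)"] exI[of _ "\<lambda>t. complex_of_real (\<beta> t) * z ^ t"]) simp
qed

lemma tri: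
  assumes "0 < k" "\<alpha> \<noteq> 0" "k - 2 \<le> m" "t < k"
  shows "uu (complex_of_real \<alpha>) (k * m + t) \<in> SS \<alpha> k"
  using assms(4)
proof (induction t rule: less_induct)
  case (less t)
  show ?case
  proof (cases "t = 0")
    case True
    then show ?thesis using uu_w_SS[OF assms(1), of \<alpha> m] by simp
  next
    case False
    define s where "s = k - t"
    define i where "i = m + 1 - s"
    have s1: "1 \<le> s" "s \<le> k - 1" "s \<le> k" using less.prems False unfolding s_def by auto
    have ks: "k - s = t" unfolding s_def using less.prems by simp
    have P: "k * i + k * (s - 1) = k * m"
    proof -
      have "i + (s - 1) = m" unfolding i_def using s1 assms(3) by linarith
      then show ?thesis by (metis add_mult_distrib2)
    qed
    have z: "complex_of_real \<alpha> \<noteq> 0" using assms(2) by simp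
    obtain c \<gamma> where cg: "c \<noteq> 0" "(cre ^^ (k * i)) (rcomm (opL \<alpha> k) (opLdag \<alpha> k) s (coh (complex_of_real \<alpha>)))
      = (\<lambda>n. c * uu (complex_of_real \<alpha>) (k * m + t) n + (\<Sum>t'<t. \<gamma> t' * uu (complex_of_real \<alpha>) (k * m + t') n))"
      using C_expand[OF s1(1) s1(3) z, of "k * i" \<alpha>] unfolding P ks by auto
    have X: "(\<lambda>n. c * uu (complex_of_real \<alpha>) (k * m + t) n + (\<Sum>t'<t. \<gamma> t' * uu (complex_of_real \<alpha>) (k * m + t') n)) \<in> SS \<alpha> k"
      using C_SS[OF assms(1) s1(1,2), of i \<alpha>] unfolding cg(2) .
    have Y: "(\<lambda>n. \<Sum>t'<t. \<gamma> t' * uu (complex_of_real \<alpha>) (k * m + t') n) \<in> SS \<alpha> k"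
      using less.prems by (intro SS_sum) (auto intro!: SS_scale less.IH)
    have "(\<lambda>n. c * uu (complex_of_real \<alpha>) (k * m + t) n) \<in> SS \<alpha> k"
      using SS_diff[OF X Y] by simp
    from SS_scale[OF this, of "inverse c"]
    have "(\<lambda>n. inverse c * (c * uu (complex_of_real \<alpha>) (k * m + t) n)) \<in> SS \<alpha> k" .
    moreover have "(\<lambda>n. inverse c * (c * uu (complex_of_real \<alpha>) (k * m + t) n)) = uu (complex_of_real \<alpha>) (k * m + t)"
      using cg(1) by (intro ext) (simp add: mult.assoc[symmetric])
    ultimately show ?thesis by simp
  qed
qed

lemma uu_alpha_SS:
  assumes "0 < k" "\<alpha> \<noteq> 0" "k * (k - 2) \<le> p"
  shows "uu (complex_of_real \<alpha>) p \<in> SS \<alpha> k"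
proof -
  have "k - 2 \<le> p div k"
    using assms(1,3) by (metis div_le_mono nonzero_mult_div_cancel_left not_gr0)
  moreover have "p mod k < k" using assms(1) by simp
  ultimately show ?thesis using tri[OF assms(1,2), of "p div k" "p mod k"] by simp
qed

lemma summable_shift_bound:
  fixes g :: "nat \<Rightarrow> real"
  assumes "\<And>n. 0 \<le> g n" "\<And>n. g n \<le> (if p \<le> n then C * y ^ (n - p) / fact (n - p) else 0)"
  shows "summable g"
proof -
  define h where "h n = (if p \<le> n then C * y ^ (n - p) / fact (n - p) else 0)" for n
  have "summable (\<lambda>m. C * (inverse (fact m) * y ^ m))"
    by (intro summable_mult summable_exp)
  then have "summable (\<lambda>m. h (m + p))" unfolding h_def by (simp add: field_simps)
  then have "summable h" by simp
  then show ?thesis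
    by (rule summable_comparison_test'[where N=0]) (use assms in \<open>auto simp: h_def\<close>)
qed

lemma fact_ratio_bound:
  assumes "p \<le> n"
  shows "(fact n / fact (n - p) :: real) \<le> 2 ^ p * fact p * 2 ^ (n - p)"
proof -
  have "real (fact p * fact (n - p) * (n choose p)) = real (fact n)"
    using binomial_fact_lemma[OF assms] by simp
  then have e: "(fact n :: real) = fact p * fact (n - p) * real (n choose p)"
    unfolding of_nat_mult of_nat_fact by simp
  have "real (n choose p) \<le> 2 ^ n"
    using binomial_le_pow2[of n p] by (metis of_nat_le_iff of_nat_numeral of_nat_power)
  also have "(2::real) ^ n = 2 ^ p * 2 ^ (n - p)" using assms by (simp add: power_add[symmetric])
  finally have "real (n choose p) \<le> 2 ^ p * 2 ^ (n - p)" .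
  then have "fact p * real (n choose p) \<le> fact p * (2 ^ p * 2 ^ (n - p))"
    by (intro mult_left_mono) auto
  then show ?thesis unfolding e by (simp add: algebra_simps)
qed

lemma uu_val:
  "uu z p n = (if p \<le> n then complex_of_real (sqrt (fact n / fact (n - p)) * exp (- (cmod z)\<^sup>2 / 2) / sqrt (fact (n - p))) * z ^ (n - p) else 0)"
  unfolding uu_def cre_pow coh_def by simp

lemma uu_norm2:
  "(cmod (uu z p n))\<^sup>2 = (if p \<le> n then (fact n / fact (n - p)) * (exp (- (cmod z)\<^sup>2 / 2))\<^sup>2 * ((cmod z)\<^sup>2) ^ (n - p) / fact (n - p) else 0)"
proof (cases "p \<le> n")
  case True
  have "(cmod (uu z p n))\<^sup>2 = (sqrt (fact n / fact (n - p)) * exp (- (cmod z)\<^sup>2 / 2) / sqrt (fact (n - p)))\<^sup>2 * ((cmod z) ^ (n - p))\<^sup>2"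
  proof -
    have "(cmod (uu z p n))\<^sup>2 = (\<bar>sqrt (fact n / fact (n - p)) * exp (- (cmod z)\<^sup>2 / 2) / sqrt (fact (n - p))\<bar> * cmod z ^ (n - p))\<^sup>2"
      unfolding uu_val by (simp only: True if_True norm_mult norm_of_real norm_power)
    then show ?thesis by (simp only: power_mult_distrib power2_abs)
  qed
  also have "\<dots> = (fact n / fact (n - p)) * (exp (- (cmod z)\<^sup>2 / 2))\<^sup>2 * ((cmod z)\<^sup>2) ^ (n - p) / fact (n - p)"
    by (simp add: power_divide power_mult_distrib power_mult[symmetric] mult.commute)
  finally show ?thesis using True by simp
qed (simp add: uu_val)

lemma inH_uu: "in_H (uu z p)"
  unfolding in_H_def
proof (rule summable_shift_bound[where p = p and C = "(exp (- (cmod z)\<^sup>2 / 2))\<^sup>2 * 2 ^ p * fact p" and y = "2 * (cmod z)\<^sup>2"])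
  fix n
  show "0 \<le> (cmod (uu z p n))\<^sup>2" by simp
  show "(cmod (uu z p n))\<^sup>2 \<le> (if p \<le> n then (exp (- (cmod z)\<^sup>2 / 2))\<^sup>2 * 2 ^ p * fact p * (2 * (cmod z)\<^sup>2) ^ (n - p) / fact (n - p) else 0)"
  proof (cases "p \<le> n")
    case True
    have "(fact n / fact (n - p)) * ((exp (- (cmod z)\<^sup>2 / 2))\<^sup>2 * ((cmod z)\<^sup>2) ^ (n - p) / fact (n - p))
        \<le> (2 ^ p * fact p * 2 ^ (n - p)) * ((exp (- (cmod z)\<^sup>2 / 2))\<^sup>2 * ((cmod z)\<^sup>2) ^ (n - p) / fact (n - p))"
      by (intro mult_right_mono fact_ratio_bound True) auto
    then show ?thesis unfolding uu_norm2 using True by (simp add: power_mult_distrib algebra_simps)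
  qed (simp add: uu_norm2)
qed

lemma tail_to_zero:
  fixes B :: "nat \<Rightarrow> real"
  assumes "summable B" "\<And>m. 0 \<le> B m" "\<delta> > 0"
  shows "\<exists>M0. \<forall>M\<ge>M0. summable (\<lambda>m. if M \<le> m then B m else 0) \<and> (\<Sum>m. if M \<le> m then B m else 0) < \<delta>"
proof -
  have lim: "(\<lambda>M. suminf B - (\<Sum>i<M. B i)) \<longlonglongrightarrow> 0"
    using tendsto_diff[OF tendsto_const[of "suminf B"] summable_LIMSEQ[OF assms(1)]] by simp
  then obtain M0 where M0: "\<forall>M\<ge>M0. norm (suminf B - (\<Sum>i<M. B i)) < \<delta>"
    using assms(3) LIMSEQ_iff[THEN iffD1, OF lim] by fastforce
  show ?thesis
  proof (intro exI[of _ M0] allI impI conjI)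
    fix M assume "M0 \<le> M"
    have s: "(\<lambda>i. B (i + M)) sums (suminf B - (\<Sum>i<M. B i))"
      using suminf_minus_initial_segment[OF assms(1), of M] summable_iff_shift[of B M] assms(1)
      by (metis summable_sums)
    have s2: "(\<lambda>m. if M \<le> m then B m else 0) sums (suminf B - (\<Sum>i<M. B i))"
      using sums_zero_iff_shift[of M "\<lambda>m. if M \<le> m then B m else 0"] s by simp
    then show "summable (\<lambda>m. if M \<le> m then B m else 0)" by (rule sums_summable)
    have "(\<Sum>m. if M \<le> m then B m else 0) = suminf B - (\<Sum>i<M. B i)" using s2 by (rule sums_unique[symmetric])
    then show "(\<Sum>m. if M \<le> m then B m else 0) < \<delta>" using M0 \<open>M0 \<le> M\<close> by auto
  qed
qed

lemma nrm_le:
  assumes "\<And>m. (cmod (f m))\<^sup>2 \<le> g m" "summable g"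
  shows "in_H f" "nrm f \<le> suminf g"
proof -
  show "in_H f" unfolding in_H_def
    by (rule summable_comparison_test'[OF assms(2), where N=0]) (use assms(1) in simp)
  then show "nrm f \<le> suminf g" unfolding nrm_def in_H_def
    by (intro suminf_le assms)
qed

definition ee :: "nat \<Rightarrow> fock" where
  "ee i = (\<lambda>m. if m = i then 1 else 0)"

lemma inH_ee: "in_H (ee i)"
  using nrm_le(1)[of "ee i" "\<lambda>m. if m = i then 1 else 0"] by (simp add: ee_def)

lemma tail_VV:
  assumes "\<And>m. N \<le> m \<Longrightarrow> ee m \<in> VV \<alpha> k" "in_H \<psi>" "\<And>m. m < N \<Longrightarrow> \<psi> m = 0"
  shows "\<psi> \<in> VV \<alpha> k"
proof (rule VV_limit[OF assms(2)])
  fix \<delta> :: real assume "\<delta> > 0"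
  obtain M0 where M0: "\<forall>M\<ge>M0. summable (\<lambda>m. if M \<le> m then (cmod (\<psi> m))\<^sup>2 else 0) \<and> (\<Sum>m. if M \<le> m then (cmod (\<psi> m))\<^sup>2 else 0) < \<delta>"
    using tail_to_zero[of "\<lambda>m. (cmod (\<psi> m))\<^sup>2" \<delta>] assms(2) \<open>\<delta> > 0\<close> unfolding in_H_def by auto
  define M where "M = max M0 N"
  have tM: "summable (\<lambda>m. if M \<le> m then (cmod (\<psi> m))\<^sup>2 else 0)" "(\<Sum>m. if M \<le> m then (cmod (\<psi> m))\<^sup>2 else 0) < \<delta>"
  proof -
    have "M0 \<le> M" unfolding M_def by simp
    then show "summable (\<lambda>m. if M \<le> m then (cmod (\<psi> m))\<^sup>2 else 0)" "(\<Sum>m. if M \<le> m then (cmod (\<psi> m))\<^sup>2 else 0) < \<delta>"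
      using M0 by simp_all
  qed
  define T where "T = (\<lambda>m. \<Sum>i\<in>{N..<M}. \<psi> i * ee i m)"
  have TV: "T \<in> VV \<alpha> k" unfolding T_def
    by (rule VV_sum) (auto intro!: VV_scale assms(1))
  have Tv: "\<And>m. T m = (if m < M then \<psi> m else 0)"
  proof -
    fix m
    have "T m = (if m \<in> {N..<M} then \<psi> m else 0)"
      unfolding T_def ee_def by (simp add: if_distrib[of "\<lambda>x. _ * x"] sum.delta cong: if_cong)
    moreover have "N \<le> M" unfolding M_def by simp
    ultimately show "T m = (if m < M then \<psi> m else 0)" using assms(3)[of m] by auto
  qed
  have "nrm (\<lambda>m. \<psi> m - T m) \<le> (\<Sum>m. if M \<le> m then (cmod (\<psi> m))\<^sup>2 else 0)"
    by (rule nrm_le(2)[OF _ tM(1)]) (simp add: Tv)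
  then show "\<exists>\<zeta>\<in>VV \<alpha> k. nrm (\<lambda>n. \<psi> n - \<zeta> n) < \<delta>"
    using TV tM(2) by (intro bexI[of _ T]) auto
qed

lemma term_formula:
  fixes a :: complex
  defines "E \<equiv> exp (- (cmod a)\<^sup>2 / 2)"
  shows "((- a) ^ j / of_real (fact j)) * uu a (n + j) m
    = (if n + j \<le> m then complex_of_real (E * sqrt (fact m) / fact (m - n)) * a ^ (m - n) * ((-1) ^ j * of_nat ((m - n) choose j)) else 0)"
proof (cases "n + j \<le> m")
  case True
  define t where "t = m - n"
  have jt: "j \<le> t" and mt: "m - (n + j) = t - j" using True unfolding t_def by auto
  define F where "F = (fact (t - j) :: real)"
  have Fp: "F > 0" unfolding F_def by simp
  have r: "sqrt (fact m / F) * E / sqrt F / fact j = E * sqrt (fact m) / fact t * real (t choose j)"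
  proof -
    define q where "q = sqrt F"
    have q: "q > 0" "F = q * q" unfolding q_def using Fp by auto
    have c: "real (t choose j) = fact t / (fact j * (q * q))"
      unfolding q(2)[symmetric] F_def using binomial_fact[OF jt] by simp
    have ft: "fact t > (0::real)" "fact j > (0::real)" by auto
    have "sqrt (fact m / F) * E / sqrt F / fact j = sqrt (fact m) / q * E / q / fact j"
      unfolding q_def by (simp add: real_sqrt_divide)
    also have "\<dots> = E * sqrt (fact m) / fact t * (fact t / (fact j * (q * q)))"
      using q(1) ft by (simp add: field_simps)
    finally show ?thesis unfolding c .
  qed
  have ap: "(- a) ^ j * a ^ (t - j) = (-1) ^ j * a ^ t"
  proof -
    have "a ^ j * a ^ (t - j) = a ^ t" using jt by (metis le_add_diff_inverse power_add)
    moreover have "(- a) ^ j = (-1) ^ j * a ^ j" by (rule power_minus)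
    ultimately show ?thesis by (simp only: mult.assoc)
  qed
  have "((- a) ^ j / of_real (fact j)) * uu a (n + j) m
      = complex_of_real (sqrt (fact m / F) * E / sqrt F / fact j) * ((- a) ^ j * a ^ (t - j))"
  proof -
    have u: "uu a (n + j) m = complex_of_real (sqrt (fact m / F) * E / sqrt F) * a ^ (t - j)"
      unfolding uu_val mt F_def E_def using True by simp
    have "(- a) ^ j / complex_of_real (fact j) * (complex_of_real (sqrt (fact m / F) * E / sqrt F) * a ^ (t - j))
       = (complex_of_real (sqrt (fact m / F) * E / sqrt F) / complex_of_real (fact j)) * ((- a) ^ j * a ^ (t - j))"
      by (simp only: mult_ac divide_inverse)
    then show ?thesis unfolding u by (simp only: of_real_divide)
  qed
  also have "\<dots> = complex_of_real (E * sqrt (fact m) / fact t) * a ^ t * ((-1) ^ j * of_nat (t choose j))"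
    unfolding r ap by (simp only: of_real_mult of_real_of_nat_eq mult_ac)
  finally show ?thesis using True unfolding t_def by simp
qed (simp add: uu_val)

lemma sumT_small:
  fixes a :: complex
  defines "E \<equiv> exp (- (cmod a)\<^sup>2 / 2)"
  assumes "m < n + J"
  shows "(\<Sum>j<J. (if n + j \<le> m then complex_of_real (E * sqrt (fact m) / fact (m - n)) * a ^ (m - n) * ((-1) ^ j * of_nat ((m - n) choose j)) else 0))
    = complex_of_real (E * sqrt (fact n)) * ee n m"
proof (cases "n \<le> m")
  case False
  then show ?thesis by (simp add: ee_def)
next
  case True
  define t where "t = m - n"
  define W where "W = complex_of_real (E * sqrt (fact m) / fact (m - n)) * a ^ (m - n)"
  have tJ: "t < J" using assms(2) True unfolding t_def by simp
  have "(\<Sum>j<J. (if n + j \<le> m then W * ((-1) ^ j * of_nat (t choose j)) else 0))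
      = (\<Sum>j<J. (if j \<in> {..t} then W * ((-1) ^ j * of_nat (t choose j)) else 0))"
    by (rule sum.cong) (use True in \<open>auto simp: t_def\<close>)
  also have "\<dots> = (\<Sum>j\<in>{..<J} \<inter> {..t}. W * ((-1) ^ j * of_nat (t choose j)))"
    by (rule sum.inter_restrict[symmetric]) simp
  also have "{..<J} \<inter> {..t} = {..t}" using tJ by auto
  also have "(\<Sum>j\<le>t. W * ((-1) ^ j * of_nat (t choose j))) = W * (\<Sum>j\<le>t. (-1) ^ j * of_nat (t choose j))"
    by (simp add: sum_distrib_left)
  also have "\<dots> = complex_of_real (E * sqrt (fact n)) * ee n m"
  proof (cases "t = 0")
    case True
    then have "m = n" using \<open>n \<le> m\<close> unfolding t_def by simp
    then show ?thesis using True unfolding W_def by (simp add: ee_def)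
  next
    case False
    then have "m \<noteq> n" unfolding t_def by auto
    moreover have "(\<Sum>j\<le>t. (-1) ^ j * (of_nat (t choose j) :: complex)) = 0"
      by (rule choose_alternating_sum) (use False in simp)
    ultimately show ?thesis by (simp add: ee_def)
  qed
  finally show ?thesis unfolding W_def t_def .
qed

lemma sumT_bound:
  fixes a :: complex
  defines "E \<equiv> exp (- (cmod a)\<^sup>2 / 2)"
  shows "cmod (\<Sum>j<J. (if n + j \<le> m then complex_of_real (E * sqrt (fact m) / fact (m - n)) * a ^ (m - n) * ((-1) ^ j * of_nat ((m - n) choose j)) else 0))
    \<le> (if n \<le> m then cmod (complex_of_real (E * sqrt (fact m) / fact (m - n)) * a ^ (m - n)) * 2 ^ (m - n) else 0)"
proof (cases "n \<le> m")
  case False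
  then show ?thesis by simp
next
  case True
  define t where "t = m - n"
  define W where "W = complex_of_real (E * sqrt (fact m) / fact (m - n)) * a ^ (m - n)"
  have "cmod (\<Sum>j<J. (if n + j \<le> m then W * ((-1) ^ j * of_nat (t choose j)) else 0))
      \<le> (\<Sum>j<J. cmod (if n + j \<le> m then W * ((-1) ^ j * of_nat (t choose j)) else 0))"
    by (rule norm_sum)
  also have "\<dots> = (\<Sum>j<J. (if j \<in> {..t} then cmod W * real (t choose j) else 0))"
    by (rule sum.cong) (use True in \<open>auto simp: t_def norm_mult norm_power\<close>)
  also have "\<dots> = (\<Sum>j\<in>{..<J} \<inter> {..t}. cmod W * real (t choose j))"
    by (rule sum.inter_restrict[symmetric]) simp
  also have "\<dots> \<le> (\<Sum>j\<le>t. cmod W * real (t choose j))"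
    by (rule sum_mono2) auto
  also have "\<dots> = cmod W * 2 ^ t"
  proof -
    have "real (\<Sum>j\<le>t. t choose j) = real (2 ^ t)" by (simp only: choose_row_sum)
    then have "(\<Sum>j\<le>t. real (t choose j)) = 2 ^ t" by simp
    then show ?thesis by (simp add: sum_distrib_left[symmetric])
  qed
  finally show ?thesis using True unfolding W_def t_def by simp
qed

lemma W_sq:
  fixes a :: complex
  defines "E \<equiv> exp (- (cmod a)\<^sup>2 / 2)"
  assumes "n \<le> m"
  shows "(cmod (complex_of_real (E * sqrt (fact m) / fact (m - n)) * a ^ (m - n)) * 2 ^ (m - n))\<^sup>2
     = (fact m / fact (m - n)) * (E\<^sup>2 * (4 * (cmod a)\<^sup>2) ^ (m - n) / fact (m - n))"
proof -
  have Ep: "E > 0" unfolding E_def by simp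
  have "cmod (complex_of_real (E * sqrt (fact m) / fact (m - n)) * a ^ (m - n)) = \<bar>E * sqrt (fact m) / fact (m - n)\<bar> * cmod a ^ (m - n)"
    by (simp only: norm_mult norm_of_real norm_power)
  moreover have "\<bar>E * sqrt (fact m) / fact (m - n)\<bar> = E * sqrt (fact m) / fact (m - n)"
    using Ep by simp
  ultimately have cw: "cmod (complex_of_real (E * sqrt (fact m) / fact (m - n)) * a ^ (m - n)) = E * sqrt (fact m) / fact (m - n) * cmod a ^ (m - n)"
    by simp
  define x where "x = cmod a"
  define k where "k = m - n"
  define f where "f = (fact (m - n) :: real)"
  have fp: "f > 0" unfolding f_def by simp
  have sq: "(sqrt (fact m))\<^sup>2 = (fact m :: real)" by simp
  have px: "\<And>y::real. (y ^ k)\<^sup>2 = (y\<^sup>2) ^ k" by (simp only: power_even_eq[symmetric] power_mult)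
  have p2: "((2::real)\<^sup>2) ^ k = 4 ^ k" by simp
  have aux: "\<And>s X Y. (E * s / f)\<^sup>2 * X * Y = (s\<^sup>2 / f) * (E\<^sup>2 * (Y * X) / f)"
    using fp by (simp add: power2_eq_square field_simps)
  have "(cmod (complex_of_real (E * sqrt (fact m) / fact (m - n)) * a ^ (m - n)) * 2 ^ (m - n))\<^sup>2
      = (E * sqrt (fact m) / f)\<^sup>2 * (x ^ k)\<^sup>2 * ((2::real) ^ k)\<^sup>2"
    unfolding cw x_def k_def f_def by (simp only: power_mult_distrib)
  also have "\<dots> = (E * sqrt (fact m) / f)\<^sup>2 * (x\<^sup>2) ^ k * 4 ^ k" unfolding px p2 by (rule refl)
  also have "\<dots> = ((sqrt (fact m))\<^sup>2 / f) * (E\<^sup>2 * (4 ^ k * (x\<^sup>2) ^ k) / f)" by (rule aux)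
  also have "\<dots> = (fact m / fact (m - n)) * (E\<^sup>2 * (4 * (cmod a)\<^sup>2) ^ (m - n) / fact (m - n))"
    unfolding sq f_def x_def k_def by (simp only: power_mult_distrib)
  finally show ?thesis .
qed

lemma B_summable:
  fixes a :: complex
  defines "E \<equiv> exp (- (cmod a)\<^sup>2 / 2)"
  shows "summable (\<lambda>m. if n \<le> m then (cmod (complex_of_real (E * sqrt (fact m) / fact (m - n)) * a ^ (m - n)) * 2 ^ (m - n))\<^sup>2 else 0)"
proof (rule summable_shift_bound[where p = n and C = "2 ^ n * fact n * E\<^sup>2" and y = "8 * (cmod a)\<^sup>2"])
  fix m
  show "0 \<le> (if n \<le> m then (cmod (complex_of_real (E * sqrt (fact m) / fact (m - n)) * a ^ (m - n)) * 2 ^ (m - n))\<^sup>2 else 0)"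
    by simp
  show "(if n \<le> m then (cmod (complex_of_real (E * sqrt (fact m) / fact (m - n)) * a ^ (m - n)) * 2 ^ (m - n))\<^sup>2 else 0)
      \<le> (if n \<le> m then 2 ^ n * fact n * E\<^sup>2 * (8 * (cmod a)\<^sup>2) ^ (m - n) / fact (m - n) else 0)"
  proof (cases "n \<le> m")
    case True
    have "(fact m / fact (m - n)) * (E\<^sup>2 * (4 * (cmod a)\<^sup>2) ^ (m - n) / fact (m - n))
        \<le> (2 ^ n * fact n * 2 ^ (m - n)) * (E\<^sup>2 * (4 * (cmod a)\<^sup>2) ^ (m - n) / fact (m - n))"
      by (intro mult_right_mono fact_ratio_bound True) auto
    also have "\<dots> = 2 ^ n * fact n * E\<^sup>2 * (8 * (cmod a)\<^sup>2) ^ (m - n) / fact (m - n)"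
    proof -
      have eq8: "(2::real) ^ (m - n) * (4 * (cmod a)\<^sup>2) ^ (m - n) = (8 * (cmod a)\<^sup>2) ^ (m - n)"
      proof -
        have "(2::real) * (4 * (cmod a)\<^sup>2) = 8 * (cmod a)\<^sup>2" by simp
        then show ?thesis by (simp only: power_mult_distrib[symmetric])
      qed
      show ?thesis unfolding eq8[symmetric] by (simp add: mult_ac)
    qed
    finally show ?thesis using True unfolding W_sq[OF True, of a, folded E_def] by simp
  qed simp
qed

lemma ee_from_uu:
  fixes a :: complex
  assumes "\<And>p. n \<le> p \<Longrightarrow> uu a p \<in> VV \<alpha> k"
  shows "ee n \<in> VV \<alpha> k"
proof -
  define E where "E = exp (- (cmod a)\<^sup>2 / 2)"
  define K where "K = complex_of_real (E * sqrt (fact n))"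
  define W where "W m = complex_of_real (E * sqrt (fact m) / fact (m - n)) * a ^ (m - n)" for m
  define B where "B m = (if n \<le> m then (cmod (W m) * 2 ^ (m - n))\<^sup>2 else 0)" for m
  define A where "A J = (\<lambda>m. \<Sum>j<J. ((- a) ^ j / of_real (fact j)) * uu a (n + j) m)" for J
  have K0: "K \<noteq> 0" unfolding K_def E_def by simp
  have Bs: "summable B" unfolding B_def W_def E_def by (rule B_summable)
  have B0: "\<And>m. 0 \<le> B m" unfolding B_def by simp
  have AV: "\<And>J. A J \<in> VV \<alpha> k" unfolding A_def
  proof (rule VV_sum)
    fix J j show "(\<lambda>m. ((- a) ^ j / of_real (fact j)) * uu a (n + j) m) \<in> VV \<alpha> k"
      by (rule VV_scale, rule assms) simp
  qed simp
  have Aval: "\<And>J m. A J m = (\<Sum>j<J. (if n + j \<le> m then W m * ((-1) ^ j * of_nat ((m - n) choose j)) else 0))"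
    unfolding A_def W_def E_def term_formula ..
  have err: "\<And>J m. 1 \<le> J \<Longrightarrow> (cmod (K * ee n m - A J m))\<^sup>2 \<le> (if n + J \<le> m then B m else 0)"
  proof -
    fix J m :: nat assume J: "1 \<le> J"
    show "(cmod (K * ee n m - A J m))\<^sup>2 \<le> (if n + J \<le> m then B m else 0)"
    proof (cases "m < n + J")
      case True
      have "A J m = K * ee n m" unfolding Aval W_def K_def E_def by (rule sumT_small[OF True])
      then show ?thesis using B0[of m] by simp
    next
      case False
      then have "ee n m = 0" "n \<le> m" using J by (auto simp: ee_def)
      have "cmod (A J m) \<le> cmod (W m) * 2 ^ (m - n)"
        using sumT_bound[where a=a and J=J and n=n and m=m] \<open>n \<le> m\<close> unfolding Aval W_def E_def by simp
      then have "(cmod (A J m))\<^sup>2 \<le> (cmod (W m) * 2 ^ (m - n))\<^sup>2"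
        by (intro power_mono) auto
      then show ?thesis using False \<open>ee n m = 0\<close> \<open>n \<le> m\<close> unfolding B_def by simp
    qed
  qed
  have KV: "(\<lambda>m. K * ee n m) \<in> VV \<alpha> k"
  proof (rule VV_limit)
    show "in_H (\<lambda>m. K * ee n m)" by (rule inH_scale(1)[OF inH_ee])
    fix \<delta> :: real assume "\<delta> > 0"
    obtain M0 where M0: "\<forall>M\<ge>M0. summable (\<lambda>m. if M \<le> m then B m else 0) \<and> (\<Sum>m. if M \<le> m then B m else 0) < \<delta>"
      using tail_to_zero[OF Bs B0 \<open>\<delta> > 0\<close>] by auto
    define J where "J = M0 + 1"
    have "M0 \<le> n + J" "1 \<le> J" unfolding J_def by auto
    then have t: "summable (\<lambda>m. if n + J \<le> m then B m else 0)" "(\<Sum>m. if n + J \<le> m then B m else 0) < \<delta>"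
      using M0 by simp_all
    have "nrm (\<lambda>m. K * ee n m - A J m) \<le> (\<Sum>m. if n + J \<le> m then B m else 0)"
      by (rule nrm_le(2)[OF _ t(1)]) (rule err[OF \<open>1 \<le> J\<close>])
    then show "\<exists>\<zeta>\<in>VV \<alpha> k. nrm (\<lambda>m. K * ee n m - \<zeta> m) < \<delta>"
      using AV t(2) by (intro bexI[of _ "A J"]) auto
  qed
  from VV_scale[OF KV, of "inverse K"] have "(\<lambda>m. inverse K * (K * ee n m)) \<in> VV \<alpha> k" .
  moreover have "(\<lambda>m. inverse K * (K * ee n m)) = ee n"
    using K0 by (intro ext) (simp add: mult.assoc[symmetric])
  ultimately show ?thesis by simp
qed

lemma omega_k:
  assumes "0 < k"
  shows "cis (2 * pi / real k) ^ k = 1"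
proof -
  have "cis (2 * pi / real k) ^ k = cis (real k * (2 * pi / real k))" by (rule Complex.DeMoivre)
  also have "real k * (2 * pi / real k) = 2 * pi" using assms by simp
  finally show ?thesis by simp
qed

lemma omega_pow_ne1:
  assumes "0 < k" "\<not> k dvd q"
  shows "cis (2 * pi / real k) ^ q \<noteq> 1"
proof -
  have "cis (2 * pi / real k) ^ q = cis (real q * (2 * pi / real k))" by (rule Complex.DeMoivre)
  also have "\<dots> = exp (\<i> * complex_of_real (real q * (2 * pi / real k)))" by (rule cis_conv_exp)
  also have "\<dots> = exp (2 * complex_of_real pi * \<i> * of_nat q / of_nat k)"
    by (simp add: field_simps)
  finally have "cis (2 * pi / real k) ^ q = exp (2 * complex_of_real pi * \<i> * of_nat q / of_nat k)" .
  moreover have "exp (2 * complex_of_real pi * \<i> * of_nat q / of_nat k) \<noteq> 1"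
    using complex_root_unity_eq_1[of k q] assms by simp
  ultimately show ?thesis by simp
qed

lemma root_sum:
  assumes "0 < k"
  shows "(\<Sum>r<k. (cis (2 * pi / real k) ^ q) ^ r) = (if k dvd q then of_nat k else 0)"
proof (cases "k dvd q")
  case True
  then obtain l where "q = k * l" by auto
  then have "cis (2 * pi / real k) ^ q = 1" using omega_k[OF assms] by (simp add: power_mult)
  then show ?thesis using True by simp
next
  case False
  define z where "z = cis (2 * pi / real k) ^ q"
  have z1: "z \<noteq> 1" unfolding z_def by (rule omega_pow_ne1[OF assms False])
  have zk: "z ^ k = 1" unfolding z_def
    by (simp add: power_mult[symmetric] mult.commute[of q k]) (simp add: power_mult omega_k[OF assms])
  have "(\<Sum>r<k. z ^ r) = (z ^ k - 1) / (z - 1)" by (rule geometric_sum[OF z1])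
  then show ?thesis using zk False unfolding z_def by simp
qed

lemma term_w:
  fixes \<omega> :: complex
  assumes "cmod \<omega> = 1" "p \<le> m"
  shows "(\<omega> ^ a) ^ r * uu (complex_of_real \<alpha> * \<omega> ^ r) p m
    = complex_of_real (sqrt (fact m / fact (m - p)) * exp (- (\<alpha>\<^sup>2) / 2) / sqrt (fact (m - p))) * complex_of_real \<alpha> ^ (m - p)
      * (\<omega> ^ (a + (m - p))) ^ r"
proof -
  have c: "(cmod (complex_of_real \<alpha> * \<omega> ^ r))\<^sup>2 = \<alpha>\<^sup>2"
    using assms(1) by (simp add: norm_mult norm_power)
  have pw: "(complex_of_real \<alpha> * \<omega> ^ r) ^ (m - p) = complex_of_real \<alpha> ^ (m - p) * (\<omega> ^ (m - p)) ^ r"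
    by (simp add: power_mult_distrib power_mult[symmetric] mult.commute)
  have om: "(\<omega> ^ a) ^ r * (\<omega> ^ (m - p)) ^ r = (\<omega> ^ (a + (m - p))) ^ r"
    by (simp add: power_add power_mult_distrib)
  show ?thesis
    unfolding uu_val c pw using assms(2) om[symmetric] by (simp add: mult_ac)
qed

lemma chi_val:
  assumes "0 < k"
  shows "(\<Sum>r<k. (cis (2 * pi / real k) ^ a) ^ r * uu (complex_of_real \<alpha> * cis (2 * pi / real k) ^ r) p m)
    = (if p \<le> m then complex_of_real (sqrt (fact m / fact (m - p)) * exp (- (\<alpha>\<^sup>2) / 2) / sqrt (fact (m - p))) * complex_of_real \<alpha> ^ (m - p)
        * (if k dvd (a + (m - p)) then of_nat k else 0) else 0)"
proof (cases "p \<le> m")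
  case True
  have "(\<Sum>r<k. (cis (2 * pi / real k) ^ a) ^ r * uu (complex_of_real \<alpha> * cis (2 * pi / real k) ^ r) p m)
     = (\<Sum>r<k. complex_of_real (sqrt (fact m / fact (m - p)) * exp (- (\<alpha>\<^sup>2) / 2) / sqrt (fact (m - p))) * complex_of_real \<alpha> ^ (m - p)
      * (cis (2 * pi / real k) ^ (a + (m - p))) ^ r)"
    by (rule sum.cong[OF refl], rule term_w[OF _ True]) simp
  also have "\<dots> = complex_of_real (sqrt (fact m / fact (m - p)) * exp (- (\<alpha>\<^sup>2) / 2) / sqrt (fact (m - p))) * complex_of_real \<alpha> ^ (m - p)
      * (\<Sum>r<k. (cis (2 * pi / real k) ^ (a + (m - p))) ^ r)"
    by (simp add: sum_distrib_left)
  finally show ?thesis unfolding root_sum[OF assms] using True by simp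
qed (simp add: uu_val)

lemma down_step:
  assumes "0 < k" "\<alpha> \<noteq> 0" "\<And>m. Suc d \<le> m \<Longrightarrow> ee m \<in> VV \<alpha> k"
  shows "ee d \<in> VV \<alpha> k"
proof -
  define J where "J = d mod k"
  define q where "q = d div k"
  define p where "p = k * q"
  have dJ: "d = p + J" unfolding J_def q_def p_def by simp
  have Jk: "J < k" unfolding J_def using assms(1) by simp
  define \<omega> where "\<omega> = cis (2 * pi / real k)"
  define a where "a = k - J"
  define Xc where "Xc = (\<lambda>m. \<Sum>r<k. (\<omega> ^ a) ^ r * uu (complex_of_real \<alpha> * \<omega> ^ r) p m)"
  define G where "G m = complex_of_real (sqrt (fact m / fact (m - p)) * exp (- (\<alpha>\<^sup>2) / 2) / sqrt (fact (m - p))) * complex_of_real \<alpha> ^ (m - p)" for m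
  have XcS: "Xc \<in> SS \<alpha> k" unfolding Xc_def
  proof (rule SS_sum)
    fix r assume "r \<in> {..<k}"
    then have "r < k" by simp
    show "(\<lambda>m. (\<omega> ^ a) ^ r * uu (complex_of_real \<alpha> * \<omega> ^ r) p m) \<in> SS \<alpha> k"
      unfolding p_def \<omega>_def by (rule SS_scale, rule uu_w_SS[OF \<open>r < k\<close>])
  qed simp
  have XcH: "in_H Xc" unfolding Xc_def
    by (rule inH_sum) (auto intro: inH_scale(1)[OF inH_uu])
  have XcV: "Xc \<in> VV \<alpha> k" by (rule SS_VV[OF XcS XcH])
  have Xcv: "\<And>m. Xc m = (if p \<le> m then G m * (if k dvd (a + (m - p)) then of_nat k else 0) else 0)"
    unfolding Xc_def G_def \<omega>_def by (rule chi_val[OF assms(1)])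
  have low: "\<And>m. m < d \<Longrightarrow> Xc m = 0"
  proof -
    fix m assume "m < d"
    show "Xc m = 0"
    proof (cases "p \<le> m")
      case True
      have mp: "m - p < J" using True \<open>m < d\<close> dJ by linarith
      have a0: "0 < a" "a + J = k" unfolding a_def using Jk by simp_all
      have "0 < a + (m - p)" using a0 by simp
      moreover have "a + (m - p) < k" using mp a0 by linarith
      ultimately have "\<not> k dvd (a + (m - p))" by (rule nat_dvd_not_less)
      then show ?thesis unfolding Xcv using True by simp
    qed (simp add: Xcv)
  qed
  have "a + (d - p) = k" unfolding a_def using dJ Jk by simp
  then have Xcd: "Xc d = G d * of_nat k" unfolding Xcv using dJ by simp
  have "G d \<noteq> 0" unfolding G_def using assms(2) by simp
  then have Xcd0: "Xc d \<noteq> 0" unfolding Xcd using assms(1) by simp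
  define tl where "tl = (\<lambda>m. Xc m - Xc d * ee d m)"
  have tlH: "in_H tl" unfolding tl_def by (rule inH_diff(1)[OF XcH inH_scale(1)[OF inH_ee]])
  have tlV: "tl \<in> VV \<alpha> k"
  proof (rule tail_VV[OF assms(3) tlH])
    fix m assume "m < Suc d"
    then show "tl m = 0" unfolding tl_def ee_def using low[of m] by (cases "m = d") auto
  qed
  have "(\<lambda>m. Xc m - tl m) \<in> VV \<alpha> k" by (rule VV_diff[OF XcV tlV])
  moreover have "(\<lambda>m. Xc m - tl m) = (\<lambda>m. Xc d * ee d m)" unfolding tl_def by auto
  ultimately have "(\<lambda>m. Xc d * ee d m) \<in> VV \<alpha> k" by simp
  from VV_scale[OF this, of "inverse (Xc d)"]
  have "(\<lambda>m. inverse (Xc d) * (Xc d * ee d m)) \<in> VV \<alpha> k" .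
  moreover have "(\<lambda>m. inverse (Xc d) * (Xc d * ee d m)) = ee d"
    using Xcd0 by (intro ext) (simp add: mult.assoc[symmetric])
  ultimately show ?thesis by simp
qed

theorem lemma9:
  fixes \<alpha> :: real and k :: nat
  assumes "\<alpha> \<noteq> 0" and "k \<ge> 3"
  shows "dense_in_H {(\<lambda>n. x n + y n) | x y. x \<in> Ea \<alpha> k \<and> y \<in> Esharp \<alpha> k}"
proof -
  have k0: "0 < k" using assms(2) by simp
  define D where "D = k * (k - 2)"
  have top: "\<And>m. D \<le> m \<Longrightarrow> ee m \<in> VV \<alpha> k"
  proof -
    fix m assume "D \<le> m"
    show "ee m \<in> VV \<alpha> k"
    proof (rule ee_from_uu[where a = "complex_of_real \<alpha>"])
      fix p assume "m \<le> p"
      then have "k * (k - 2) \<le> p" using \<open>D \<le> m\<close> unfolding D_def by simp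
      then show "uu (complex_of_real \<alpha>) p \<in> VV \<alpha> k"
        by (intro SS_VV inH_uu uu_alpha_SS k0 assms(1))
    qed
  qed
  have P0: "\<forall>m. 0 \<le> m \<longrightarrow> ee m \<in> VV \<alpha> k"
  proof (rule inc_induct[of 0 D "\<lambda>N. \<forall>m. N \<le> m \<longrightarrow> ee m \<in> VV \<alpha> k"])
    show "0 \<le> D" by simp
    show "\<forall>m. D \<le> m \<longrightarrow> ee m \<in> VV \<alpha> k" using top by simp
  next
    fix N assume IH: "\<forall>m. Suc N \<le> m \<longrightarrow> ee m \<in> VV \<alpha> k"
    show "\<forall>m. N \<le> m \<longrightarrow> ee m \<in> VV \<alpha> k"
    proof (intro allI impI)
      fix m assume "N \<le> m"
      show "ee m \<in> VV \<alpha> k"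
      proof (cases "m = N")
        case True
        have "ee N \<in> VV \<alpha> k" by (rule down_step[OF k0 assms(1)]) (use IH in simp)
        then show ?thesis using True by simp
      next
        case False
        then have "Suc N \<le> m" using \<open>N \<le> m\<close> by simp
        then show ?thesis using IH by simp
      qed
    qed
  qed
  have all: "\<And>\<psi>. in_H \<psi> \<Longrightarrow> \<psi> \<in> VV \<alpha> k"
  proof -
    fix \<psi> :: fock assume h: "in_H \<psi>"
    show "\<psi> \<in> VV \<alpha> k"
      by (rule tail_VV[where N = 0, OF _ h]) (use P0 in simp_all)
  qed
  show ?thesis unfolding dense_in_H_def
  proof (intro allI impI)
    fix \<psi> :: fock and \<epsilon> :: real
    assume "in_H \<psi>" "\<epsilon> > 0"
    then have e2: "\<epsilon>\<^sup>2 > 0" by simp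
    obtain \<phi> where ph: "\<phi> \<in> SS \<alpha> k" "in_H \<phi>" "nrm (\<lambda>n. \<psi> n - \<phi> n) < \<epsilon>\<^sup>2"
      using VV_approx[OF all[OF \<open>in_H \<psi>\<close>] e2] by auto
    show "\<exists>\<phi>\<in>{(\<lambda>n. x n + y n) | x y. x \<in> Ea \<alpha> k \<and> y \<in> Esharp \<alpha> k}. in_H \<phi> \<and> (\<Sum>n. (cmod (\<psi> n - \<phi> n))\<^sup>2) < \<epsilon>\<^sup>2"
      apply (rule bexI[of _ \<phi>])
      using ph unfolding SS_def nrm_def by simp_all
  qed
qed

end
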